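(* Let $M_{1/2} := \mathbb{N}_0[\frac12]$. A nonzero element $P(x) \in \mathbb{Q}[M_{1/2}]$ is irreducible in $\mathbb{Q}[M_{1/2}]$ if and only if $P(x^{2^n})$ is irreducible in $\mathbb{Q}[x]$ for every $n \in \mathbb{N}$ such that $P(x^{2^n}) \in \mathbb{Q}[x]$.
   Context: $\mathbb{Q}[M_{1/2}]$ is the domain of polynomial expressions $\sum c_i x^{m_i}$ with $c_i \in \mathbb{Q}$ and $m_i$ nonnegative dyadic rationals; $P(x^{2^n})$ denotes the expression obtained by replacing each $x^{m}$ by $x^{2^n m}$. *)

theory Defs
  imports "HOL-Library.Poly_Mapping" "HOL-Computational_Algebra.Polynomial"
    "HOL-Computational_Algebra.Factorial_Ring"
begin

typedef dyadic = "{q :: rat. 0 \<le> q \<and> (\<exists>n::nat. q * 2 ^ n \<in> \<int>)}"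
  morphisms rat_of_dyadic Abs_dyadic
  by (rule exI[of _ 0]) auto

setup_lifting type_definition_dyadic

instantiation dyadic :: comm_monoid_add
begin
lift_definition zero_dyadic :: dyadic is 0 by auto
lift_definition plus_dyadic :: "dyadic \<Rightarrow> dyadic \<Rightarrow> dyadic" is "(+)"
proof -
  fix a b :: rat
  assume a: "0 \<le> a \<and> (\<exists>n::nat. a * 2 ^ n \<in> \<int>)" and b: "0 \<le> b \<and> (\<exists>n::nat. b * 2 ^ n \<in> \<int>)"
  then obtain m n :: nat where m: "a * 2 ^ m \<in> \<int>" and n: "b * 2 ^ n \<in> \<int>" by blast
  have "a * 2 ^ (m + n) = (a * 2 ^ m) * 2 ^ n" by (simp add: power_add)
  also have "\<dots> \<in> \<int>" using m by simp
  finally have 1: "a * 2 ^ (m + n) \<in> \<int>" .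
  have "b * 2 ^ (m + n) = (b * 2 ^ n) * 2 ^ m" by (simp add: power_add)
  also have "\<dots> \<in> \<int>" using n by simp
  finally have 2: "b * 2 ^ (m + n) \<in> \<int>" .
  have "(a + b) * 2 ^ (m + n) \<in> \<int>" using 1 2 by (simp add: distrib_right)
  then show "0 \<le> a + b \<and> (\<exists>n::nat. (a + b) * 2 ^ n \<in> \<int>)" using a b by auto
qed
instance by standard (transfer, simp)+
end

text \<open>The monoid algebra Q[M_{1/2}]: finitely supported functions M_{1/2} \<Rightarrow> Q with
  convolution product; the monomial x^m is Poly_Mapping.single m 1.\<close>

type_synonym QM = "dyadic \<Rightarrow>\<^sub>0 rat"

text \<open>P(x^{2^n}) lies in Q[x]: every exponent m in the support satisfies 2^n m \<in> N_0.\<close>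
definition in_Qx_after :: "nat \<Rightarrow> QM \<Rightarrow> bool" where
  "in_Qx_after n P \<longleftrightarrow> (\<forall>m \<in> Poly_Mapping.keys P. rat_of_dyadic m * 2 ^ n \<in> \<int>)"

text \<open>The polynomial P(x^{2^n}) \<in> Q[x] (meaningful when in_Qx_after n P holds):
  each x^m is replaced by x^{2^n m}.\<close>
definition subst_pow2 :: "nat \<Rightarrow> QM \<Rightarrow> rat poly" where
  "subst_pow2 n P = (\<Sum>m \<in> Poly_Mapping.keys P. monom (Poly_Mapping.lookup P m) (nat \<lfloor>rat_of_dyadic m * 2 ^ n\<rfloor>))"

end

theory Submission
  imports Defs
begin

definition ex :: "nat \<Rightarrow> dyadic \<Rightarrow> nat" where
  "ex n m = nat \<lfloor>rat_of_dyadic m * 2 ^ n\<rfloor>"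

lemma subst_def2: "subst_pow2 n P = (\<Sum>m \<in> Poly_Mapping.keys P. monom (Poly_Mapping.lookup P m) (ex n m))"
  by (simp add: subst_pow2_def ex_def)

lemma subst_superset:
  assumes "finite S" "Poly_Mapping.keys X \<subseteq> S"
  shows "subst_pow2 n X = (\<Sum>m \<in> S. monom (Poly_Mapping.lookup X m) (ex n m))"
  unfolding subst_def2
  by (rule sum.mono_neutral_left) (use assms in \<open>auto simp: in_keys_iff\<close>)

lemma subst_add: "subst_pow2 n (X + Y) = subst_pow2 n X + subst_pow2 n Y"
proof -
  let ?S = "Poly_Mapping.keys X \<union> Poly_Mapping.keys Y"
  have "subst_pow2 n (X + Y) = (\<Sum>m \<in> ?S. monom (Poly_Mapping.lookup (X+Y) m) (ex n m))"
    by (rule subst_superset) (auto dest: subsetD[OF keys_add])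
  also have "\<dots> = (\<Sum>m \<in> ?S. monom (Poly_Mapping.lookup X m) (ex n m)) + (\<Sum>m \<in> ?S. monom (Poly_Mapping.lookup Y m) (ex n m))"
    by (simp add: lookup_add add_monom[symmetric] sum.distrib)
  also have "\<dots> = subst_pow2 n X + subst_pow2 n Y"
    by (simp add: subst_superset[symmetric])
  finally show ?thesis .
qed

lemma subst_zero: "subst_pow2 n 0 = 0"
  by (simp add: subst_def2)

lemma subst_minus: "subst_pow2 n (X - Y) = subst_pow2 n X - subst_pow2 n Y"
  by (metis add_diff_cancel_right' diff_add_cancel subst_add)

lemma subst_single: "subst_pow2 n (Poly_Mapping.single a c) = monom c (ex n a)"
  by (simp add: subst_def2)

lemma subst_sum: "subst_pow2 n (sum f A) = (\<Sum>a\<in>A. subst_pow2 n (f a))"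
  by (induction A rule: infinite_finite_induct) (auto simp: subst_zero subst_add)

lemma decomp: "X = (\<Sum>a \<in> Poly_Mapping.keys X. Poly_Mapping.single a (Poly_Mapping.lookup X a))"
proof (rule poly_mapping_eqI)
  fix k
  show "Poly_Mapping.lookup X k = Poly_Mapping.lookup (\<Sum>a \<in> Poly_Mapping.keys X. Poly_Mapping.single a (Poly_Mapping.lookup X a)) k"
    by (auto simp: lookup_sum lookup_single when_def in_keys_iff)
qed

lemma rat_nonneg: "0 \<le> rat_of_dyadic m"
  using rat_of_dyadic by auto

lemma ex_add:
  assumes "rat_of_dyadic a * 2 ^ n \<in> \<int>" "rat_of_dyadic b * 2 ^ n \<in> \<int>"
  shows "ex n (a + b) = ex n a + ex n b"
proof -
  obtain i where i: "rat_of_dyadic a * 2 ^ n = of_int i" using assms(1) Ints_cases by metis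
  obtain j where j: "rat_of_dyadic b * 2 ^ n = of_int j" using assms(2) Ints_cases by metis
  have "i \<ge> 0" using i rat_nonneg[of a]
    by (metis of_int_0_le_iff zero_le_mult_iff zero_less_power zero_less_numeral not_le order.strict_iff_not)
  moreover have "j \<ge> 0" using j rat_nonneg[of b]
    by (metis of_int_0_le_iff zero_le_mult_iff zero_less_power zero_less_numeral not_le order.strict_iff_not)
  moreover have "rat_of_dyadic (a + b) * 2 ^ n = of_int (i + j)"
    using i j by (simp add: plus_dyadic.rep_eq distrib_right)
  ultimately show ?thesis using i j by (simp add: ex_def nat_add_distrib)
qed

lemma subst_mult:
  assumes "in_Qx_after n X" "in_Qx_after n Y"
  shows "subst_pow2 n (X * Y) = subst_pow2 n X * subst_pow2 n Y"
proof -
  let ?KX = "Poly_Mapping.keys X" and ?KY = "Poly_Mapping.keys Y"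
  have "X * Y = (\<Sum>a \<in> ?KX. Poly_Mapping.single a (Poly_Mapping.lookup X a)) *
       (\<Sum>b \<in> ?KY. Poly_Mapping.single b (Poly_Mapping.lookup Y b))"
    using decomp[of X] decomp[of Y] by simp
  also have "\<dots> = (\<Sum>a \<in> ?KX. \<Sum>b \<in> ?KY. Poly_Mapping.single (a + b) (Poly_Mapping.lookup X a * Poly_Mapping.lookup Y b))"
    by (simp add: sum_product mult_single)
  finally have 1: "X * Y = \<dots>" .
  have "subst_pow2 n (X * Y) = (\<Sum>a \<in> ?KX. \<Sum>b \<in> ?KY. monom (Poly_Mapping.lookup X a * Poly_Mapping.lookup Y b) (ex n (a + b)))"
    by (subst 1) (simp add: subst_sum subst_single)
  also have "\<dots> = (\<Sum>a \<in> ?KX. \<Sum>b \<in> ?KY. monom (Poly_Mapping.lookup X a) (ex n a) * monom (Poly_Mapping.lookup Y b) (ex n b))"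
    using assms by (intro sum.cong refl) (simp add: mult_monom ex_add in_Qx_after_def)
  also have "\<dots> = subst_pow2 n X * subst_pow2 n Y"
    by (simp add: subst_def2 sum_product)
  finally show ?thesis .
qed

lemma ex_inj:
  assumes "rat_of_dyadic a * 2 ^ n \<in> \<int>" "rat_of_dyadic b * 2 ^ n \<in> \<int>" "ex n a = ex n b"
  shows "a = b"
proof -
  obtain i where i: "rat_of_dyadic a * 2 ^ n = of_int i" using assms(1) Ints_cases by metis
  obtain j where j: "rat_of_dyadic b * 2 ^ n = of_int j" using assms(2) Ints_cases by metis
  have "i \<ge> 0" using i rat_nonneg[of a]
    by (metis of_int_0_le_iff zero_le_mult_iff zero_less_power zero_less_numeral not_le order.strict_iff_not)
  moreover have "j \<ge> 0" using j rat_nonneg[of b]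
    by (metis of_int_0_le_iff zero_le_mult_iff zero_less_power zero_less_numeral not_le order.strict_iff_not)
  ultimately have "i = j" using assms(3) i j by (simp add: ex_def)
  then have "rat_of_dyadic a * 2 ^ n = rat_of_dyadic b * 2 ^ n" using i j by simp
  then have "rat_of_dyadic a = rat_of_dyadic b" by simp
  then show ?thesis by (simp add: rat_of_dyadic_inject)
qed

lemma coeff_subst:
  assumes "in_Qx_after n X" "m \<in> Poly_Mapping.keys X"
  shows "coeff (subst_pow2 n X) (ex n m) = Poly_Mapping.lookup X m"
proof -
  have "coeff (subst_pow2 n X) (ex n m) = (\<Sum>m' \<in> Poly_Mapping.keys X. if m' = m then Poly_Mapping.lookup X m' else 0)"
    unfolding subst_def2 coeff_sum coeff_monom
    using assms by (intro sum.cong refl) (auto simp: in_Qx_after_def dest: ex_inj)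
  also have "\<dots> = Poly_Mapping.lookup X m" using assms(2) by simp
  finally show ?thesis .
qed

lemma subst_eq0:
  assumes "in_Qx_after n X" "subst_pow2 n X = 0"
  shows "X = 0"
proof (rule ccontr)
  assume "X \<noteq> 0"
  then obtain m where m: "m \<in> Poly_Mapping.keys X"
    by (metis all_not_in_conv decomp sum.empty)
  then have "coeff (subst_pow2 n X) (ex n m) \<noteq> 0" using coeff_subst[OF assms(1) m] by (simp add: in_keys_iff)
  then show False using assms(2) by simp
qed

lemma ex_zero_iff: "ex n m = 0 \<Longrightarrow> rat_of_dyadic m * 2 ^ n \<in> \<int> \<Longrightarrow> m = 0"
  by (rule ex_inj[of m n 0]) (auto simp: ex_def zero_dyadic.rep_eq)

lemma ex0: "ex n 0 = 0"
  by (simp add: ex_def zero_dyadic.rep_eq)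

lemma subst_deg0:
  assumes "in_Qx_after n X" "degree (subst_pow2 n X) = 0"
  shows "X = Poly_Mapping.single 0 (Poly_Mapping.lookup X 0)"
proof -
  have K: "Poly_Mapping.keys X \<subseteq> {0}"
  proof
    fix m assume m: "m \<in> Poly_Mapping.keys X"
    have "coeff (subst_pow2 n X) (ex n m) \<noteq> 0" using coeff_subst[OF assms(1) m] m by (simp add: in_keys_iff)
    then have "ex n m \<le> 0" using assms(2) le_degree by fastforce
    then show "m \<in> {0}" using ex_zero_iff assms(1) m by (auto simp: in_Qx_after_def)
  qed
  show ?thesis
  proof (rule poly_mapping_eqI)
    fix k show "Poly_Mapping.lookup X k = Poly_Mapping.lookup (Poly_Mapping.single 0 (Poly_Mapping.lookup X 0)) k"
      using K by (cases "k = 0") (auto simp: lookup_single in_keys_iff)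
  qed
qed

lemma inQ_zero: "in_Qx_after n 0"
  by (simp add: in_Qx_after_def)

lemma inQ_mult:
  assumes "in_Qx_after n X" "in_Qx_after n Y"
  shows "in_Qx_after n (X * Y)"
  unfolding in_Qx_after_def
proof
  fix m assume "m \<in> Poly_Mapping.keys (X * Y)"
  then obtain a b where "m = a + b" "a \<in> Poly_Mapping.keys X" "b \<in> Poly_Mapping.keys Y"
    using keys_mult by blast
  then show "rat_of_dyadic m * 2 ^ n \<in> \<int>" using assms
    by (auto simp: in_Qx_after_def plus_dyadic.rep_eq distrib_right)
qed

lemma inQ_mono:
  assumes "in_Qx_after n X" "n \<le> k"
  shows "in_Qx_after k X"
  unfolding in_Qx_after_def
proof
  fix m assume "m \<in> Poly_Mapping.keys X"
  then have "rat_of_dyadic m * 2 ^ n \<in> \<int>" using assms by (auto simp: in_Qx_after_def)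
  moreover have "rat_of_dyadic m * 2 ^ k = (rat_of_dyadic m * 2 ^ n) * 2 ^ (k - n)"
    using assms(2) by (simp add: power_add[symmetric])
  ultimately show "rat_of_dyadic m * 2 ^ k \<in> \<int>" by (metis Ints_mult Ints_power Ints_numeral)
qed

lemma fin_level: "finite K \<Longrightarrow> \<exists>n. \<forall>m \<in> K. rat_of_dyadic m * 2 ^ n \<in> \<int>"
proof (induction K rule: finite_induct)
  case empty then show ?case by simp
next
  case (insert x F)
  then obtain n where n: "\<forall>m \<in> F. rat_of_dyadic m * 2 ^ n \<in> \<int>" by blast
  obtain k where k: "rat_of_dyadic x * 2 ^ k \<in> \<int>" using rat_of_dyadic[of x] by auto
  have "\<forall>m \<in> insert x F. rat_of_dyadic m * 2 ^ (n + k) \<in> \<int>"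
  proof
    fix m assume "m \<in> insert x F"
    then show "rat_of_dyadic m * 2 ^ (n + k) \<in> \<int>"
    proof
      assume "m = x"
      then show ?thesis using k by (metis Ints_mult Ints_power Ints_numeral mult.assoc mult.commute power_add)
    next
      assume "m \<in> F"
      then show ?thesis using n by (metis Ints_mult Ints_power Ints_numeral mult.assoc power_add)
    qed
  qed
  then show ?case by blast
qed

lemma inQ_ex: "\<exists>n. in_Qx_after n X"
  using fin_level[of "Poly_Mapping.keys X"] by (auto simp: in_Qx_after_def)

lemma inQ_ex2: "\<exists>n. in_Qx_after n X \<and> in_Qx_after n Y"
proof -
  obtain a b where "in_Qx_after a X" "in_Qx_after b Y" using inQ_ex by blast
  then show ?thesis using inQ_mono[of a X "max a b"] inQ_mono[of b Y "max a b"] by auto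
qed

lemma subst_one: "subst_pow2 n 1 = 1"
  by (metis single_one subst_single ex0 monom_0 one_pCons)

lemma subst_const: "subst_pow2 n (Poly_Mapping.single 0 c) = [:c:]"
  by (simp add: subst_single ex0 monom_0)

lemma unit_QM: "(X :: QM) dvd 1 \<longleftrightarrow> (\<exists>c. c \<noteq> 0 \<and> X = Poly_Mapping.single 0 c)"
proof
  assume "X dvd 1"
  then obtain Y where Y: "1 = X * Y" by (auto elim: dvdE)
  obtain n where n: "in_Qx_after n X" "in_Qx_after n Y" using inQ_ex2 by blast
  have "subst_pow2 n X * subst_pow2 n Y = 1" using Y subst_mult[OF n] subst_one by simp
  then have u: "is_unit (subst_pow2 n X)" by (metis dvd_triv_left)
  then have nz: "subst_pow2 n X \<noteq> 0" by auto
  then have "degree (subst_pow2 n X) = 0" using u is_unit_iff_degree by blast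
  then have X: "X = Poly_Mapping.single 0 (Poly_Mapping.lookup X 0)" using subst_deg0 n(1) by blast
  have "Poly_Mapping.lookup X 0 \<noteq> 0" using X nz subst_zero by (metis single_zero)
  then show "\<exists>c. c \<noteq> 0 \<and> X = Poly_Mapping.single 0 c" using X by blast
next
  assume "\<exists>c. c \<noteq> 0 \<and> X = Poly_Mapping.single 0 c"
  then obtain c where c: "c \<noteq> 0" "X = Poly_Mapping.single 0 c" by blast
  then have "X * Poly_Mapping.single 0 (1 / c) = 1" by (simp add: mult_single)
  then show "X dvd 1" by (metis dvd_triv_left)
qed

definition dy :: "nat \<Rightarrow> nat \<Rightarrow> dyadic" where
  "dy n k = Abs_dyadic (of_nat k / 2 ^ n)"

lemma rat_dy: "rat_of_dyadic (dy n k) = of_nat k / 2 ^ n"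
proof -
  have "(0::rat) \<le> of_nat k / 2 ^ n" by simp
  moreover have "(of_nat k / 2 ^ n :: rat) * 2 ^ n \<in> \<int>" by simp
  ultimately have "(of_nat k / 2 ^ n :: rat) \<in> {q :: rat. 0 \<le> q \<and> (\<exists>n::nat. q * 2 ^ n \<in> \<int>)}"
    by blast
  then show ?thesis unfolding dy_def by (rule Abs_dyadic_inverse)
qed

lemma ex_dy: "ex n (dy n k) = k"
  by (simp add: ex_def rat_dy)

lemma lift_ex: "\<exists>X. in_Qx_after n X \<and> subst_pow2 n X = p"
proof -
  define X where "X = (\<Sum>k\<le>degree p. Poly_Mapping.single (dy n k) (coeff p k))"
  have "subst_pow2 n X = p"
    unfolding X_def subst_sum subst_single ex_dy by (rule poly_as_sum_of_monoms)
  moreover have "in_Qx_after n X"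
    unfolding in_Qx_after_def
  proof
    fix m assume "m \<in> Poly_Mapping.keys X"
    then have "m \<in> (\<Union>k\<in>{..degree p}. Poly_Mapping.keys (Poly_Mapping.single (dy n k) (coeff p k)))"
      unfolding X_def by (rule subsetD[OF keys_sum])
    then obtain k where "m \<in> Poly_Mapping.keys (Poly_Mapping.single (dy n k) (coeff p k))"
      by blast
    then have "m = dy n k" by (simp split: if_splits)
    then show "rat_of_dyadic m * 2 ^ n \<in> \<int>" by (simp add: rat_dy)
  qed
  ultimately show ?thesis by blast
qed

lemma subst_inj:
  assumes "in_Qx_after n X" "in_Qx_after n Y" "subst_pow2 n X = subst_pow2 n Y"
  shows "X = Y"
proof -
  have "in_Qx_after n (X - Y)" using assms(1,2) unfolding in_Qx_after_def
  proof (intro ballI)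
    fix m assume "m \<in> Poly_Mapping.keys (X - Y)"
    then have "m \<in> Poly_Mapping.keys X \<or> m \<in> Poly_Mapping.keys Y"
      by (metis in_keys_iff lookup_minus diff_self)
    then show "rat_of_dyadic m * 2 ^ n \<in> \<int>" using assms(1,2) unfolding in_Qx_after_def by blast
  qed
  moreover have "subst_pow2 n (X - Y) = 0" using assms(3) by (simp add: subst_minus)
  ultimately show ?thesis using subst_eq0 by fastforce
qed

lemma unit_subst:
  assumes "in_Qx_after n X" "subst_pow2 n X dvd 1"
  shows "X dvd 1"
proof -
  have nz: "subst_pow2 n X \<noteq> 0" using assms(2) by auto
  then have "degree (subst_pow2 n X) = 0" using assms(2) is_unit_iff_degree by blast
  then have X: "X = Poly_Mapping.single 0 (Poly_Mapping.lookup X 0)" using subst_deg0 assms(1) by blast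
  have "Poly_Mapping.lookup X 0 \<noteq> 0" using X nz subst_zero by (metis single_zero)
  then show ?thesis using X unit_QM by blast
qed

lemma subst_unit:
  assumes "X dvd 1"
  shows "subst_pow2 n X dvd 1"
proof -
  obtain c where "c \<noteq> 0" "X = Poly_Mapping.single 0 c" using assms unit_QM by blast
  then have "subst_pow2 n X * [:1/c:] = 1" by (simp add: subst_const)
  then show ?thesis by (metis dvd_triv_left)
qed

theorem lemma4p1:
  fixes P :: QM
  assumes "P \<noteq> 0"
  shows "irreducible P \<longleftrightarrow>
           (\<forall>n::nat. in_Qx_after n P \<longrightarrow> irreducible (subst_pow2 n P))"
proof
  assume irr: "irreducible P"
  show "\<forall>n::nat. in_Qx_after n P \<longrightarrow> irreducible (subst_pow2 n P)"
  proof (intro allI impI)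
    fix n assume n: "in_Qx_after n P"
    have "subst_pow2 n P \<noteq> 0" using subst_eq0[OF n] assms by blast
    moreover have "\<not> subst_pow2 n P dvd 1" using unit_subst[OF n] irr by (auto simp: irreducible_def)
    moreover have "subst_pow2 n P = a * b \<longrightarrow> a dvd 1 \<or> b dvd 1" for a b
    proof
      assume ab: "subst_pow2 n P = a * b"
      obtain A where A: "in_Qx_after n A" "subst_pow2 n A = a" using lift_ex by blast
      obtain B where B: "in_Qx_after n B" "subst_pow2 n B = b" using lift_ex by blast
      have "P = A * B"
        by (rule subst_inj[OF n inQ_mult[OF A(1) B(1)]]) (simp add: subst_mult A B ab)
      then have "A dvd 1 \<or> B dvd 1" using irr by (auto simp: irreducible_def)
      then show "a dvd 1 \<or> b dvd 1" using subst_unit A B by blast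
    qed
    ultimately show "irreducible (subst_pow2 n P)" by (auto simp: irreducible_def)
  qed
next
  assume R: "\<forall>n::nat. in_Qx_after n P \<longrightarrow> irreducible (subst_pow2 n P)"
  obtain n0 where n0: "in_Qx_after n0 P" using inQ_ex by blast
  have "\<not> P dvd 1"
    using subst_unit[of P n0] R n0 by (auto simp: irreducible_def)
  moreover have "P = A * B \<longrightarrow> A dvd 1 \<or> B dvd 1" for A B
  proof
    assume ab: "P = A * B"
    obtain n where n: "in_Qx_after n A" "in_Qx_after n B" using inQ_ex2 by blast
    have "in_Qx_after n P" using ab inQ_mult[OF n] by simp
    then have "irreducible (subst_pow2 n P)" using R by blast
    moreover have "subst_pow2 n P = subst_pow2 n A * subst_pow2 n B" using ab subst_mult[OF n] by simp
    ultimately have "subst_pow2 n A dvd 1 \<or> subst_pow2 n B dvd 1" by (auto simp: irreducible_def)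
    then show "A dvd 1 \<or> B dvd 1" using unit_subst n by blast
  qed
  ultimately show "irreducible P" using assms by (auto simp: irreducible_def)
qed

end
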